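(* Let $\epsilon>0$, $\delta\in(0,1)$, $x>0$, and let $\mathcal{R}$ consist of $M=\frac{48x}{\epsilon^2}\ln\frac{2n}{\delta}$ independently generated random RR sets. If $I_{max}\ge xn$, then with probability at least $1-\delta_1$, $\mathcal{F_R}^*\ge x-\epsilon$, where $\delta_1=\left(\frac{\delta}{2n}\right)^{24}$.
   Context: $G=\langle V,E,w\rangle$ is a network with $n=|V|$ under the Linear Threshold or Independent Cascade model (live-edge form: LT — each node $v$ independently selects at most one incoming live edge, $(u,v)$ with probability $w_{uv}/W_v$ where $W_v=w_v+\sum_u w_{uv}$ includes a self-weight $w_v$; IC — each edge $(u,v)$ live independently with probability $w_{uv}$). $I_u$ is the expected number of nodes reachable from $u$ via live edges and $I_{max}=\max_u I_u$. A random RR set is the set of nodes that can reach a uniformly random node $v\in V$ via live edges in a freshly sampled live-edge graph. $\mathcal{F_R}(u)$ is the fraction of RR sets in $\mathcal{R}$ containing $u$, and $\mathcal{F_R}^*=\max_{u\in V}\mathcal{F_R}(u)$. *)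

theory Defs
  imports "HOL-Probability.Probability"
begin

text \<open>Network: finite vertex set V, edge set E \<subseteq> V \<times> V, edge weights w u v
  (weight of edge (u,v)), self-weights ws v (used by the LT model).\<close>

definition ic_live :: "('v \<times> 'v) set \<Rightarrow> ('v \<Rightarrow> 'v \<Rightarrow> real) \<Rightarrow> ('v \<times> 'v) set pmf" where
  "ic_live E w = map_pmf (\<lambda>b. {e \<in> E. b e}) (Pi_pmf E False (\<lambda>(u, v). bernoulli_pmf (w u v)))"

definition lt_W :: "('v \<times> 'v) set \<Rightarrow> ('v \<Rightarrow> 'v \<Rightarrow> real) \<Rightarrow> ('v \<Rightarrow> real) \<Rightarrow> 'v \<Rightarrow> real" where
  "lt_W E w ws v = ws v + (\<Sum>u\<in>{u. (u, v) \<in> E}. w u v)"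

text \<open>Choice of node v: Some u = incoming live edge (u,v) with prob w u v / W v;
  None = no live incoming edge, with prob w_v / W v.\<close>
definition lt_choice :: "('v \<times> 'v) set \<Rightarrow> ('v \<Rightarrow> 'v \<Rightarrow> real) \<Rightarrow> ('v \<Rightarrow> real) \<Rightarrow> 'v \<Rightarrow> 'v option pmf" where
  "lt_choice E w ws v = embed_pmf (\<lambda>c. case c of
       None \<Rightarrow> ws v / lt_W E w ws v
     | Some u \<Rightarrow> (if (u, v) \<in> E then w u v / lt_W E w ws v else 0))"

definition lt_live :: "'v set \<Rightarrow> ('v \<times> 'v) set \<Rightarrow> ('v \<Rightarrow> 'v \<Rightarrow> real) \<Rightarrow> ('v \<Rightarrow> real) \<Rightarrow> ('v \<times> 'v) set pmf" where
  "lt_live V E w ws = map_pmf (\<lambda>c. {(u, v). v \<in> V \<and> c v = Some u}) (Pi_pmf V None (lt_choice E w ws))"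

definition live_edge_model ::
  "'v set \<Rightarrow> ('v \<times> 'v) set \<Rightarrow> ('v \<Rightarrow> 'v \<Rightarrow> real) \<Rightarrow> ('v \<Rightarrow> real) \<Rightarrow> ('v \<times> 'v) set pmf \<Rightarrow> bool" where
  "live_edge_model V E w ws G \<longleftrightarrow> finite V \<and> V \<noteq> {} \<and> E \<subseteq> V \<times> V \<and>
     (((\<forall>(u, v)\<in>E. 0 \<le> w u v \<and> w u v \<le> 1) \<and> G = ic_live E w) \<or>
      ((\<forall>(u, v)\<in>E. 0 \<le> w u v) \<and> (\<forall>v\<in>V. 0 \<le> ws v \<and> 0 < lt_W E w ws v) \<and> G = lt_live V E w ws))"

definition influence :: "'v set \<Rightarrow> ('v \<times> 'v) set pmf \<Rightarrow> 'v \<Rightarrow> real" where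
  "influence V G u = measure_pmf.expectation G (\<lambda>L. real (card {v \<in> V. (u, v) \<in> L\<^sup>*}))"

definition I_max :: "'v set \<Rightarrow> ('v \<times> 'v) set pmf \<Rightarrow> real" where
  "I_max V G = Max (influence V G ` V)"

definition rr_set :: "'v set \<Rightarrow> ('v \<times> 'v) set pmf \<Rightarrow> 'v set pmf" where
  "rr_set V G = bind_pmf (pmf_of_set V) (\<lambda>v. map_pmf (\<lambda>L. {u \<in> V. (u, v) \<in> L\<^sup>*}) G)"

definition rr_collection :: "'v set \<Rightarrow> ('v \<times> 'v) set pmf \<Rightarrow> nat \<Rightarrow> (nat \<Rightarrow> 'v set) pmf" where
  "rr_collection V G M = Pi_pmf {..<M} {} (\<lambda>_. rr_set V G)"

definition frac_cov :: "nat \<Rightarrow> (nat \<Rightarrow> 'v set) \<Rightarrow> 'v \<Rightarrow> real" where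
  "frac_cov M R u = real (card {i \<in> {..<M}. u \<in> R i}) / real M"

definition frac_star :: "'v set \<Rightarrow> nat \<Rightarrow> (nat \<Rightarrow> 'v set) \<Rightarrow> real" where
  "frac_star V M R = Max (frac_cov M R ` V)"

end

theory Submission
  imports Defs
begin
lemma exp_neg_quad: assumes "(t::real) \<ge> 0" shows "exp (-t) \<le> 1 - t + t^2/2"
proof -
  let ?f = "\<lambda>s::real. 1 - s + s^2/2 - exp (-s)"
  have "?f 0 \<le> ?f t"
  proof (rule DERIV_nonneg_imp_nondecreasing[OF assms])
    fix s :: real assume "0 \<le> s" "s \<le> t"
    have "DERIV ?f s :> (- 1 + s + exp (-s))"
      by (auto intro!: derivative_eq_intros)
    moreover have "- 1 + s + exp (-s) \<ge> 0" using exp_ge_add_one_self[of "-s"] by simp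
    ultimately show "\<exists>y. DERIV ?f s :> y \<and> 0 \<le> y" by blast
  qed
  thus ?thesis by simp
qed

lemma binom_pgf:
  assumes p: "p \<in> {0..1}"
  shows "measure_pmf.expectation (binomial_pmf M p) (\<lambda>k. (z::real) ^ k) = (p * z + (1 - p)) ^ M"
proof -
  have "measure_pmf.expectation (binomial_pmf M p) (\<lambda>k. z ^ k) =
     (\<Sum>k\<le>M. (real (M choose k) * p ^ k * (1 - p) ^ (M - k)) *\<^sub>R z ^ k)"
    by (rule expectation_binomial_pmf'[OF p])
  also have "\<dots> = (\<Sum>k\<le>M. real (M choose k) * (p * z) ^ k * (1 - p) ^ (M - k))"
    by (intro sum.cong refl) (simp add: power_mult_distrib mult_ac)
  also have "\<dots> = (p * z + (1 - p)) ^ M" by (rule binomial_ring[symmetric])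
  finally show ?thesis .
qed

lemma binom_mgf:
  assumes p: "p \<in> {0..1}"
  shows "measure_pmf.expectation (binomial_pmf M p) (\<lambda>k. exp (- t * real k)) = (p * exp (-t) + (1 - p)) ^ M"
proof -
  have "measure_pmf.expectation (binomial_pmf M p) (\<lambda>k. exp (- t * real k)) =
        measure_pmf.expectation (binomial_pmf M p) (\<lambda>k. exp (- t) ^ k)"
    by (rule Bochner_Integration.integral_cong[OF refl]) (metis exp_of_nat_mult mult.commute)
  also have "\<dots> = (p * exp (-t) + (1 - p)) ^ M" by (rule binom_pgf[OF p])
  finally show ?thesis .
qed

lemma chernoff_lower:
  assumes p: "0 < p" "p \<le> 1" and d: "0 < d"
  shows "measure_pmf.prob (binomial_pmf M p) {k. real k < (p - d) * real M} \<le> exp (- (d^2 * real M / (2 * p)))"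
proof -
  define t where "t = d / p"
  define a where "a = (p - d) * real M"
  have t: "t > 0" using p d by (simp add: t_def)
  have pp: "p \<in> {0..1}" using p by auto
  have "measure_pmf.prob (binomial_pmf M p) {k. real k < a} =
        measure_pmf.expectation (binomial_pmf M p) (indicator {k. real k < a})" by simp
  also have "\<dots> \<le> measure_pmf.expectation (binomial_pmf M p) (\<lambda>k. exp (t * a) * exp (- t * real k))"
  proof (rule integral_mono)
    show "integrable (measure_pmf (binomial_pmf M p)) (indicator {k. real k < a} :: nat \<Rightarrow> real)"
      using pp by (rule integrable_binomial_pmf)
    show "integrable (measure_pmf (binomial_pmf M p)) (\<lambda>k. exp (t * a) * exp (- t * real k))"
      using pp by (rule integrable_binomial_pmf)
    fix k :: nat
    show "indicator {k. real k < a} k \<le> exp (t * a) * exp (- t * real k)"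
    proof (cases "real k < a")
      case True
      have "exp (t * a) * exp (- t * real k) = exp (t * (a - real k))"
        by (simp add: exp_add[symmetric] algebra_simps)
      also have "\<dots> \<ge> 1" using True t by simp
      finally show ?thesis using True by simp
    qed simp
  qed
  also have "\<dots> = exp (t * a) * (p * exp (-t) + (1 - p)) ^ M"
    using binom_mgf[OF pp, where t=t and M=M] by simp
  also have "\<dots> \<le> exp (t * a) * exp (- p * (1 - exp (-t))) ^ M"
  proof -
    have "p * exp (-t) + (1 - p) = 1 + (- p * (1 - exp (-t)))" by (simp add: algebra_simps)
    also have "\<dots> \<le> exp (- p * (1 - exp (-t)))" by (rule exp_ge_add_one_self[unfolded add.commute[of _ 1]])
    finally have h: "p * exp (-t) + (1 - p) \<le> exp (- p * (1 - exp (-t)))" .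
    have h0: "0 \<le> p * exp (-t) + (1 - p)" using p by (simp add: add_nonneg_nonneg)
    show ?thesis by (intro mult_left_mono power_mono h h0) simp
  qed
  also have "\<dots> = exp (t * a - p * real M * (1 - exp (-t)))"
    by (simp add: exp_of_nat_mult[symmetric] exp_add[symmetric] algebra_simps)
  also have "\<dots> \<le> exp (- (d^2 * real M / (2 * p)))"
  proof -
    have e: "1 - exp (-t) \<ge> t - t^2/2"
      using exp_neg_quad[of t] t by simp
    have "t * a - p * real M * (1 - exp (-t)) \<le> t * a - p * real M * (t - t^2/2)"
      using e p by (intro diff_left_mono mult_left_mono) auto
    also have "\<dots> = - (d^2 * real M / (2 * p))"
      using p unfolding t_def a_def by (simp add: field_simps power2_eq_square)
    finally show ?thesis by simp
  qed
  finally show ?thesis unfolding a_def .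
qed

lemma bool_pmf_bernoulli: "(q :: bool pmf) = bernoulli_pmf (pmf q True)"
proof (rule pmf_eqI)
  fix b :: bool
  have "0 \<le> pmf q True" "pmf q True \<le> 1" by (simp_all add: pmf_le_1)
  then show "pmf q b = pmf (bernoulli_pmf (pmf q True)) b"
    by (cases b) (simp_all add: pmf_False_conv_True)
qed

lemma count_binomial:
  fixes rr :: "'v set pmf" and u :: 'v and M :: nat
  defines "p \<equiv> pmf (map_pmf (\<lambda>S. u \<in> S) rr) True"
  shows "map_pmf (\<lambda>R. card {i\<in>{..<M}. u \<in> R i}) (Pi_pmf {..<M} {} (\<lambda>_. rr)) = binomial_pmf M p"
proof -
  have p01: "p \<in> {0..1}" unfolding p_def by (simp add: pmf_le_1)
  have "binomial_pmf M p = map_pmf (\<lambda>f. card {x\<in>{..<M}. f x}) (Pi_pmf {..<M} False (\<lambda>_. bernoulli_pmf p))"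
    by (rule binomial_pmf_altdef') (use p01 in auto)
  also have "bernoulli_pmf p = map_pmf (\<lambda>S. u \<in> S) rr"
    unfolding p_def by (rule bool_pmf_bernoulli[symmetric])
  also have "Pi_pmf {..<M} False (\<lambda>_. map_pmf (\<lambda>S. u \<in> S) rr) = map_pmf (\<lambda>h. (\<lambda>S. u \<in> S) \<circ> h) (Pi_pmf {..<M} {} (\<lambda>_. rr))"
    by (rule Pi_pmf_map) auto
  finally show ?thesis by (simp add: pmf.map_comp o_def)
qed

lemma p_eq:
  fixes V :: "'v set" and G :: "('v \<times> 'v) set pmf"
  assumes fin: "finite V" and ne: "V \<noteq> {}" and u: "u \<in> V"
  shows "pmf (map_pmf (\<lambda>S. u \<in> S) (rr_set V G)) True = influence V G u / real (card V)"
proof -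
  have "map_pmf (\<lambda>S. u \<in> S) (rr_set V G) = bind_pmf (pmf_of_set V) (\<lambda>v. map_pmf (\<lambda>L. (u, v) \<in> L\<^sup>*) G)"
    unfolding rr_set_def map_bind_pmf using u by (simp add: pmf.map_comp o_def)
  then have "pmf (map_pmf (\<lambda>S. u \<in> S) (rr_set V G)) True =
     measure_pmf.expectation (pmf_of_set V) (\<lambda>v. pmf (map_pmf (\<lambda>L. (u, v) \<in> L\<^sup>*) G) True)"
    by (simp add: pmf_bind)
  also have "\<dots> = (\<Sum>v\<in>V. pmf (map_pmf (\<lambda>L. (u, v) \<in> L\<^sup>*) G) True) / real (card V)"
    using fin ne by (simp add: integral_pmf_of_set)
  also have "(\<Sum>v\<in>V. pmf (map_pmf (\<lambda>L. (u, v) \<in> L\<^sup>*) G) True) = influence V G u"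
  proof -
    have c: "real (card {v \<in> V. (u, v) \<in> L\<^sup>*}) = (\<Sum>v\<in>V. indicator {L. (u, v) \<in> L\<^sup>*} L)" for L
    proof -
      have "real (card {v \<in> V. (u, v) \<in> L\<^sup>*}) = (\<Sum>v\<in>{v \<in> V. (u, v) \<in> L\<^sup>*}. 1)" by simp
      also have "\<dots> = (\<Sum>v\<in>V. if (u, v) \<in> L\<^sup>* then 1 else 0)"
        by (rule sum.inter_filter[OF fin])
      finally show ?thesis unfolding indicator_def of_bool_def mem_Collect_eq .
    qed
    have "influence V G u = measure_pmf.expectation G (\<lambda>L. \<Sum>v\<in>V. indicator {L. (u, v) \<in> L\<^sup>*} L)"
      unfolding influence_def c ..
    also have "\<dots> = (\<Sum>v\<in>V. measure_pmf.expectation G (indicator {L. (u, v) \<in> L\<^sup>*}))"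
      by (rule Bochner_Integration.integral_sum) (auto intro!: measure_pmf.integrable_const_bound[where B=1])
    also have "\<dots> = (\<Sum>v\<in>V. pmf (map_pmf (\<lambda>L. (u, v) \<in> L\<^sup>*) G) True)"
      by (intro sum.cong refl) (simp add: pmf_map vimage_def)
    finally show ?thesis by simp
  qed
  finally show ?thesis .
qed

theorem lemma6p4:
  fixes V :: "'v set" and E :: "('v \<times> 'v) set" and w :: "'v \<Rightarrow> 'v \<Rightarrow> real"
    and ws :: "'v \<Rightarrow> real" and G :: "('v \<times> 'v) set pmf"
    and \<epsilon> \<delta> x :: real and M :: nat
  assumes model: "live_edge_model V E w ws G"
    and eps: "\<epsilon> > 0" and delta: "0 < \<delta>" "\<delta> < 1" and xpos: "x > 0"
    and M_def: "M = nat \<lceil>48 * x / \<epsilon>\<^sup>2 * ln (2 * real (card V) / \<delta>)\<rceil>"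
    and Imax: "I_max V G \<ge> x * real (card V)"
  shows "measure_pmf.prob (rr_collection V G M) {R. frac_star V M R \<ge> x - \<epsilon>}
           \<ge> 1 - (\<delta> / (2 * real (card V))) ^ 24"
proof -
  have fin: "finite V" and ne: "V \<noteq> {}" using model unfolding live_edge_model_def by auto
  define n where "n = real (card V)"
  have n1: "n \<ge> 1" unfolding n_def using fin ne by (simp add: Suc_leI card_gt_0_iff)
  have "Max (influence V G ` V) \<in> influence V G ` V" by (rule Max_in) (use fin ne in auto)
  then obtain u where u: "u \<in> V" and uI: "influence V G u = I_max V G"
    unfolding I_max_def by (metis imageE)
  define p where "p = pmf (map_pmf (\<lambda>S. u \<in> S) (rr_set V G)) True"
  have p_val: "p = influence V G u / n" unfolding p_def n_def by (rule p_eq[OF fin ne u])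
  have px: "p \<ge> x" using Imax uI n1 unfolding p_val by (simp add: field_simps n_def)
  have p1: "p \<le> 1" unfolding p_def by (simp add: pmf_le_1)
  define L where "L = ln (2 * n / \<delta>)"
  have Lpos: "L > 0" unfolding L_def using n1 delta by (simp add: field_simps)
  have MLbound: "real M \<ge> 48 * x / \<epsilon>\<^sup>2 * L" unfolding M_def L_def n_def by (rule real_nat_ceiling_ge)
  have Mpos: "real M > 0" using MLbound Lpos xpos eps by (smt (verit) divide_pos_pos mult_pos_pos zero_less_power)
  have fs: "frac_star V M R \<ge> frac_cov M R u" for R
    unfolding frac_star_def using fin u by (intro Max_ge) auto
  have d1: "(\<delta> / (2 * n)) ^ 24 = exp (- (24 * L))"
  proof -
    have "exp (- (24 * L)) = exp (- L) ^ 24" by (metis exp_of_nat_mult mult_minus_right of_nat_numeral)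
    also have "exp (- L) = \<delta> / (2 * n)" unfolding L_def exp_minus using n1 delta by simp
    finally show ?thesis by simp
  qed
  show ?thesis
  proof (cases "x \<le> \<epsilon>")
    case True
    have "{R. frac_star V M R \<ge> x - \<epsilon>} = UNIV"
    proof -
      have "frac_star V M R \<ge> x - \<epsilon>" for R
        using fs[of R] True unfolding frac_cov_def by (smt (verit) divide_nonneg_nonneg of_nat_0_le_iff)
      thus ?thesis by auto
    qed
    moreover have "(\<delta> / (2 * real (card V))) ^ 24 \<ge> 0" using delta by simp
    ultimately show ?thesis by simp
  next
    case False
    define d where "d = p - x + \<epsilon>"
    have dpos: "d > 0" unfolding d_def using px eps by simp
    have p0: "p > 0" using px xpos by simp
    define bad where "bad = {R. \<not> frac_star V M R \<ge> x - \<epsilon>}"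
    have sub: "bad \<subseteq> (\<lambda>R. card {i\<in>{..<M}. u \<in> R i}) -` {k. real k < (p - d) * real M}"
    proof
      fix R assume "R \<in> bad"
      then have "frac_cov M R u < x - \<epsilon>" using fs[of R] unfolding bad_def by simp
      then have "real (card {i\<in>{..<M}. u \<in> R i}) < (x - \<epsilon>) * real M"
        unfolding frac_cov_def using Mpos by (simp add: field_simps)
      then show "R \<in> (\<lambda>R. card {i\<in>{..<M}. u \<in> R i}) -` {k. real k < (p - d) * real M}"
        unfolding d_def by simp
    qed
    have "measure_pmf.prob (rr_collection V G M) bad \<le>
          measure_pmf.prob (rr_collection V G M) ((\<lambda>R. card {i\<in>{..<M}. u \<in> R i}) -` {k. real k < (p - d) * real M})"
      by (rule measure_pmf.finite_measure_mono[OF sub]) simp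
    also have "\<dots> = measure_pmf.prob (binomial_pmf M p) {k. real k < (p - d) * real M}"
      unfolding rr_collection_def p_def count_binomial[symmetric] by simp
    also have "\<dots> \<le> exp (- (d^2 * real M / (2 * p)))"
      by (rule chernoff_lower[OF p0 p1 dpos])
    also have "\<dots> \<le> exp (- (24 * L))"
    proof -
      have key: "d^2 * x \<ge> p * \<epsilon>^2"
      proof -
        define q where "q = p - x"
        have q0: "q \<ge> 0" unfolding q_def using px by simp
        have "d^2 * x - p * \<epsilon>^2 = q^2 * x + q * \<epsilon> * (2 * x - \<epsilon>)"
          unfolding d_def q_def by (simp add: algebra_simps power2_eq_square)
        moreover have "q^2 * x + q * \<epsilon> * (2 * x - \<epsilon>) \<ge> 0"
          using q0 eps xpos False by (intro add_nonneg_nonneg mult_nonneg_nonneg) auto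
        ultimately show ?thesis by simp
      qed
      have "d^2 * real M / (2 * p) \<ge> d^2 * (48 * x / \<epsilon>\<^sup>2 * L) / (2 * p)"
        using MLbound p0 by (intro divide_right_mono mult_left_mono) auto
      also have "d^2 * (48 * x / \<epsilon>\<^sup>2 * L) / (2 * p) = 24 * L * ((d^2 * x) / (p * \<epsilon>^2))"
        using p0 eps by (simp add: field_simps)
      also have "\<dots> \<ge> 24 * L * 1"
        using key p0 eps Lpos by (intro mult_left_mono) (auto simp: field_simps)
      finally show ?thesis by simp
    qed
    finally have bb: "measure_pmf.prob (rr_collection V G M) bad \<le> (\<delta> / (2 * n)) ^ 24" using d1 by simp
    have "{R. frac_star V M R \<ge> x - \<epsilon>} = space (measure_pmf (rr_collection V G M)) - bad"
      unfolding bad_def by auto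
    then have "measure_pmf.prob (rr_collection V G M) {R. frac_star V M R \<ge> x - \<epsilon>}
        = 1 - measure_pmf.prob (rr_collection V G M) bad"
      using measure_pmf.prob_compl[where M="rr_collection V G M" and A=bad] by simp
    then show ?thesis using bb unfolding n_def by simp
  qed
qed

end
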